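(* Let $\Phi$ be a real, additive gain graph on $\{1,\dots,n\}$ and let $\mathbf{Q}=(Q_1,\dots,Q_n)\in(\mathbb{E}^d)^n$ with $Q_i\neq Q_j$ whenever $i$ and $j$ are adjacent in $\Phi$. Let $C$ be a circle in $\Phi$ with $l+1$ vertices $v_1,\dots,v_{l+1}$, and let $\mathcal{C}=\{h(e):e\in C\}$. Suppose $Q_{v_1},\dots,Q_{v_{l+1}}$ are affinely independent. If $C$ is balanced, then $\bigcap\mathcal{C}$ is an affine flat of dimension $d-l$.
   Context: $\mathbb{E}^d$ is Euclidean $d$-space with distance $d(\cdot,\cdot)$; $\psi_{ij}(P)=d(P,Q_i)^2-d(P,Q_j)^2$. A real, additive gain graph $\Phi$ on vertex set $\{1,\dots,n\}$ is a finite graph (multiple edges allowed, every edge with two distinct endpoints) with gains $\phi(e;i,j)\in\mathbb{R}$ for each edge $e$ with endpoints $i,j$, satisfying $\phi(e;j,i)=-\phi(e;i,j)$. A circle is a simple closed path; it is balanced if the sum of its gains, read in a consistent direction, is $0$. The Pythagorean arrangement $\mathcal{H}(\Phi;\mathbf{Q})$ consists of the hyperplanes $h(e)=\{P:\psi_{ij}(P)=\phi(e;i,j)\}$, one for each edge $e$ with endpoints $i,j$. *)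

theory Defs
  imports "HOL-Analysis.Analysis"
begin

text \<open>A real additive gain graph on vertex set {1..n}: a finite edge set E (edge
identifiers of an arbitrary type, so multiple edges are allowed), an endpoint map
ends giving each edge an (arbitrary reference) orientation (i,j), and a real gain g e
meaning phi(e;i,j) = g e where (i,j) = ends e; phi(e;j,i) = - g e.\<close>

definition gain_graph :: "nat \<Rightarrow> 'e set \<Rightarrow> ('e \<Rightarrow> nat \<times> nat) \<Rightarrow> bool" where
  "gain_graph n E ends \<longleftrightarrow> finite E \<and>
     (\<forall>e\<in>E. fst (ends e) \<in> {1..n} \<and> snd (ends e) \<in> {1..n} \<and> fst (ends e) \<noteq> snd (ends e))"

text \<open>Gain of edge e read from i to j (meaningful when {i,j} are the endpoints of e).\<close>
definition gain :: "('e \<Rightarrow> nat \<times> nat) \<Rightarrow> ('e \<Rightarrow> real) \<Rightarrow> 'e \<Rightarrow> nat \<Rightarrow> nat \<Rightarrow> real" where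
  "gain ends g e i j = (if ends e = (i, j) then g e else - g e)"

definition adjacent :: "'e set \<Rightarrow> ('e \<Rightarrow> nat \<times> nat) \<Rightarrow> nat \<Rightarrow> nat \<Rightarrow> bool" where
  "adjacent E ends i j \<longleftrightarrow> (\<exists>e\<in>E. ends e = (i, j) \<or> ends e = (j, i))"

definition is_circle :: "'e set \<Rightarrow> ('e \<Rightarrow> nat \<times> nat) \<Rightarrow> nat list \<Rightarrow> 'e list \<Rightarrow> bool" where
  "is_circle E ends vs es \<longleftrightarrow> length vs \<ge> 2 \<and> length es = length vs \<and>
     distinct vs \<and> distinct es \<and> set es \<subseteq> E \<and>
     (\<forall>k<length vs. ends (es ! k) = (vs ! k, vs ! ((k + 1) mod length vs)) \<or>
                    ends (es ! k) = (vs ! ((k + 1) mod length vs), vs ! k))"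

definition balanced_circle :: "('e \<Rightarrow> nat \<times> nat) \<Rightarrow> ('e \<Rightarrow> real) \<Rightarrow> nat list \<Rightarrow> 'e list \<Rightarrow> bool" where
  "balanced_circle ends g vs es \<longleftrightarrow>
     (\<Sum>k<length vs. gain ends g (es ! k) (vs ! k) (vs ! ((k + 1) mod length vs))) = 0"

definition psi :: "(nat \<Rightarrow> 'a::euclidean_space) \<Rightarrow> nat \<Rightarrow> nat \<Rightarrow> 'a \<Rightarrow> real" where
  "psi Q i j P = (dist P (Q i))\<^sup>2 - (dist P (Q j))\<^sup>2"

text \<open>The hyperplane h(e) = {P. psi_ij(P) = phi(e;i,j)} (independent of orientation).\<close>
definition hyp :: "('e \<Rightarrow> nat \<times> nat) \<Rightarrow> ('e \<Rightarrow> real) \<Rightarrow> (nat \<Rightarrow> 'a::euclidean_space) \<Rightarrow> 'e \<Rightarrow> 'a set" where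
  "hyp ends g Q e = {P. psi Q (fst (ends e)) (snd (ends e)) P = gain ends g e (fst (ends e)) (snd (ends e))}"

end

theory Submission imports Defs begin

lemma flat_solution:
  fixes W :: "'a::euclidean_space set" and b :: "'a \<Rightarrow> real"
  assumes ind: "independent W"
  defines "S \<equiv> {P. \<forall>v\<in>W. inner P v = b v}"
  shows "affine S \<and> S \<noteq> {} \<and> aff_dim S = int DIM('a) - int (card W)"
proof -
  have fin: "finite W" using ind independent_explicit by blast
  define T where "T = (\<lambda>x. \<Sum>v\<in>W. inner x v *\<^sub>R v)"
  have linT: "linear T"
    unfolding T_def
    by (rule linearI) (simp_all add: inner_add_left scaleR_add_left sum.distrib scaleR_sum_right)
  let ?V = "span W"
  have TV: "T ` ?V \<subseteq> ?V"
    unfolding T_def by (auto intro!: span_sum span_mul intro: span_base)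
  have inj: "inj_on T ?V"
  proof (subst linear_inj_on_iff_eq_0[OF linT subspace_span], intro ballI impI)
    fix x assume x: "x \<in> ?V" and Tx: "T x = 0"
    have "inner x (T x) = (\<Sum>v\<in>W. (inner x v)^2)"
      unfolding T_def by (simp add: inner_sum_right power2_eq_square)
    hence "(\<Sum>v\<in>W. (inner x v)^2) = 0" using Tx by simp
    hence "\<forall>v\<in>W. (inner x v)^2 = 0" using fin by (simp add: sum_nonneg_eq_0_iff)
    hence "\<And>v. v \<in> W \<Longrightarrow> orthogonal x v" by (simp add: orthogonal_def)
    hence "orthogonal x x" using orthogonal_to_span x by blast
    thus "x = 0" by (simp add: orthogonal_self)
  qed
  have TVV: "T ` ?V = ?V"
  proof (rule subspace_dim_equal)
    show "subspace (T ` ?V)" by (rule linear_subspace_image[OF linT subspace_span])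
    show "subspace ?V" by simp
    show "T ` ?V \<subseteq> ?V" by (rule TV)
    have "dim (T ` ?V) = dim ?V"
      by (rule dim_image_eq[OF linT]) (simp add: inj span_span)
    thus "dim ?V \<le> dim (T ` ?V)" by simp
  qed
  have "(\<Sum>v\<in>W. b v *\<^sub>R v) \<in> ?V" by (auto intro!: span_sum span_mul intro: span_base)
  hence "(\<Sum>v\<in>W. b v *\<^sub>R v) \<in> T ` ?V" by (simp only: TVV)
  then obtain p where "p \<in> ?V" and Tp: "T p = (\<Sum>v\<in>W. b v *\<^sub>R v)" by (elim imageE) simp
  hence z: "(\<Sum>v\<in>W. (inner p v - b v) *\<^sub>R v) = 0"
    unfolding T_def by (simp add: scaleR_diff_left sum_subtractf)
  have "\<forall>c. (\<Sum>v\<in>W. c v *\<^sub>R v) = 0 \<longrightarrow> (\<forall>v \<in> W. c v = 0)"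
    using ind by (simp add: independent_explicit)
  hence "(\<Sum>v\<in>W. (inner p v - b v) *\<^sub>R v) = 0 \<longrightarrow> (\<forall>v \<in> W. inner p v - b v = 0)"
    by (rule spec)
  hence "\<forall>v\<in>W. inner p v - b v = 0" using z by (rule mp)
  hence pS: "p \<in> S" unfolding S_def by simp
  define N where "N = {y. \<forall>x\<in>W. orthogonal x y}"
  have subN: "subspace N" unfolding N_def by (rule subspace_orthogonal_to_vectors)
  have SN: "S = (+) p ` N"
  proof (rule set_eqI)
    fix x
    have "x \<in> S \<longleftrightarrow> x - p \<in> N"
      using pS unfolding S_def N_def orthogonal_def
      by (auto simp: inner_diff_left inner_diff_right inner_commute)
    also have "\<dots> \<longleftrightarrow> x \<in> (+) p ` N"
    proof
      assume "x - p \<in> N" thus "x \<in> (+) p ` N" by (rule rev_image_eqI) simp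
    next
      assume "x \<in> (+) p ` N" thus "x - p \<in> N" by auto
    qed
    finally show "x \<in> S \<longleftrightarrow> x \<in> (+) p ` N" .
  qed
  have N2: "N = {y \<in> UNIV. \<forall>x\<in>?V. orthogonal x y}"
    unfolding N_def
  proof (intro set_eqI iffI; simp)
    fix y assume "\<forall>x\<in>W. orthogonal x y"
    thus "\<forall>x\<in>span W. orthogonal x y"
      using orthogonal_to_span orthogonal_commute by metis
  next
    fix y assume "\<forall>x\<in>span W. orthogonal x y"
    thus "\<forall>x\<in>W. orthogonal x y" using span_base by blast
  qed
  have "dim N + dim ?V = dim (UNIV :: 'a set)"
    unfolding N2 by (rule dim_subspace_orthogonal_to_vectors) auto
  hence dN: "dim N + card W = DIM('a)"
    by (simp add: dim_eq_card_independent ind)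
  have "affine S" unfolding SN using affine_translation subN subspace_imp_affine by blast
  moreover have "S \<noteq> {}" using pS by blast
  moreover have "aff_dim S = int DIM('a) - int (card W)"
    unfolding SN aff_dim_translation_eq aff_dim_subspace[OF subN] using dN by linarith
  ultimately show ?thesis by blast
qed

lemma psi_split: "psi Q i j P = psi Q i0 j P - psi Q i0 i P"
  unfolding psi_def by simp

lemma psi_swap: "psi Q j i P = - psi Q i j P"
  unfolding psi_def by simp

lemma psi_inner:
  fixes Q :: "nat \<Rightarrow> 'a::euclidean_space"
  shows "psi Q i j P = 2 * inner P (Q j - Q i) + inner (Q i) (Q i) - inner (Q j) (Q j)"
  unfolding psi_def dist_norm power2_norm_eq_inner
  by (simp add: inner_diff_left inner_diff_right inner_commute algebra_simps)

theorem lemma5p3: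
  fixes n l :: nat and E :: "'e set" and ends :: "'e \<Rightarrow> nat \<times> nat" and g :: "'e \<Rightarrow> real"
    and Q :: "nat \<Rightarrow> 'a::euclidean_space" and vs :: "nat list" and es :: "'e list"
  assumes "gain_graph n E ends"
    and "\<And>i j. adjacent E ends i j \<Longrightarrow> Q i \<noteq> Q j"
    and "is_circle E ends vs es"
    and "length vs = l + 1"
    and "inj_on Q (set vs)"
    and "\<not> affine_dependent (Q ` set vs)"
    and "balanced_circle ends g vs es"
  shows "affine (\<Inter>e\<in>set es. hyp ends g Q e) \<and> (\<Inter>e\<in>set es. hyp ends g Q e) \<noteq> {}
         \<and> aff_dim (\<Inter>e\<in>set es. hyp ends g Q e) = int DIM('a) - int l"
proof -
  note circ = assms(3)[unfolded is_circle_def]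
  have len: "length vs = l + 1" by (rule assms(4))
  have lenes: "length es = l + 1" using circ len by simp
  have l1: "l \<ge> 1" using circ len by simp
  have dist: "distinct vs" using circ by simp
  define m where "m k = (k + 1) mod (l + 1)" for k
  define c where "c k = gain ends g (es!k) (vs!k) (vs!(m k))" for k
  have hypk: "hyp ends g Q (es!k) = {P. psi Q (vs!k) (vs!(m k)) P = c k}" if k: "k < l + 1" for k
  proof -
    have mk: "m k < l + 1" unfolding m_def by simp
    have "m k \<noteq> k"
    proof (cases "k = l")
      case True thus ?thesis using l1 unfolding m_def by simp
    next
      case False hence "k + 1 < l + 1" using k by simp
      thus ?thesis unfolding m_def by simp
    qed
    hence neq: "vs!k \<noteq> vs!(m k)" using dist k mk len by (simp add: nth_eq_iff_index_eq)
    have "ends (es ! k) = (vs ! k, vs ! (m k)) \<or> ends (es ! k) = (vs ! (m k), vs ! k)"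
      using circ k len unfolding m_def by auto
    thus ?thesis
    proof
      assume "ends (es ! k) = (vs ! k, vs ! (m k))"
      thus ?thesis unfolding hyp_def c_def by simp
    next
      assume e: "ends (es ! k) = (vs ! (m k), vs ! k)"
      have "gain ends g (es!k) (vs!(m k)) (vs!k) = g (es!k)" using e by (simp add: gain_def)
      moreover have "c k = - g (es!k)" using e neq by (simp add: c_def gain_def)
      ultimately show ?thesis unfolding hyp_def using e psi_swap[of Q "vs!k" "vs!(m k)"]
        by (auto simp: algebra_simps)
    qed
  qed
  have I1: "(\<Inter>e\<in>set es. hyp ends g Q e) = {P. \<forall>k<l+1. psi Q (vs!k) (vs!(m k)) P = c k}"
  proof -
    have "set es = (\<lambda>k. es!k) ` {..<l+1}" using lenes by (auto simp: in_set_conv_nth)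
    hence "(\<Inter>e\<in>set es. hyp ends g Q e) = (\<Inter>k\<in>{..<l+1}. hyp ends g Q (es!k))" by simp
    also have "\<dots> = (\<Inter>k\<in>{..<l+1}. {P. psi Q (vs!k) (vs!(m k)) P = c k})"
      using hypk by simp
    finally show ?thesis by auto
  qed
  define \<phi> where "\<phi> k P = psi Q (vs!0) (vs!k) P" for k P
  define s where "s k = (\<Sum>j<k. c j)" for k
  have phi0: "\<phi> 0 P = 0" for P unfolding \<phi>_def psi_def by simp
  have sl: "s (l+1) = 0" using assms(7) len unfolding balanced_circle_def s_def c_def m_def by simp
  have mlt: "m k = k + 1" if "k < l" for k using that unfolding m_def by simp
  have ml: "m l = 0" unfolding m_def by simp
  have C: "(\<forall>k<l+1. psi Q (vs!k) (vs!(m k)) P = c k) \<longleftrightarrow> (\<forall>k\<le>l. \<phi> k P = s k)" for P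
  proof
    assume H: "\<forall>k<l+1. psi Q (vs!k) (vs!(m k)) P = c k"
    have "k \<le> l \<longrightarrow> \<phi> k P = s k" for k
    proof (induction k)
      case 0 show ?case using phi0 by (simp add: s_def)
    next
      case (Suc k)
      show ?case
      proof
        assume "Suc k \<le> l"
        hence "k < l + 1" "m k = k + 1" using mlt[of k] by auto
        hence "psi Q (vs!k) (vs!(k+1)) P = c k" using H by metis
        hence "\<phi> (k+1) P - \<phi> k P = c k" unfolding \<phi>_def using psi_split[of Q "vs!k" "vs!(k+1)" P "vs!0"] by simp
        thus "\<phi> (Suc k) P = s (Suc k)" using Suc \<open>Suc k \<le> l\<close> by (simp add: s_def)
      qed
    qed
    thus "\<forall>k\<le>l. \<phi> k P = s k" by blast
  next
    assume H: "\<forall>k\<le>l. \<phi> k P = s k"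
    show "\<forall>k<l+1. psi Q (vs!k) (vs!(m k)) P = c k"
    proof (intro allI impI)
      fix k assume k: "k < l + 1"
      have ps: "psi Q (vs!k) (vs!(m k)) P = \<phi> (m k) P - \<phi> k P"
        unfolding \<phi>_def by (rule psi_split)
      show "psi Q (vs!k) (vs!(m k)) P = c k"
      proof (cases "k = l")
        case True
        have "s (l+1) = s l + c l" by (simp add: s_def)
        thus ?thesis using True ps ml phi0 H sl by simp
      next
        case False hence kl: "k < l" using k by simp
        have "s (k+1) = s k + c k" by (simp add: s_def)
        thus ?thesis using ps mlt[OF kl] H kl by simp
      qed
    qed
  qed
  define w where "w k = Q (vs!k) - Q (vs!0)" for k
  define bb where "bb k = (s k - inner (Q (vs!0)) (Q (vs!0)) + inner (Q (vs!k)) (Q (vs!k))) / 2" for k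
  have D: "(\<forall>k\<le>l. \<phi> k P = s k) \<longleftrightarrow> (\<forall>k\<in>{1..l}. inner P (w k) = bb k)" for P
  proof -
    have e: "\<phi> k P = s k \<longleftrightarrow> inner P (w k) = bb k" for k
      unfolding \<phi>_def psi_inner w_def bb_def by auto
    have z: "\<phi> 0 P = s 0" using phi0 by (simp add: s_def)
    show ?thesis
    proof
      assume "\<forall>k\<le>l. \<phi> k P = s k" thus "\<forall>k\<in>{1..l}. inner P (w k) = bb k" using e by auto
    next
      assume A: "\<forall>k\<in>{1..l}. inner P (w k) = bb k"
      show "\<forall>k\<le>l. \<phi> k P = s k"
      proof (intro allI impI)
        fix k assume "k \<le> l"
        show "\<phi> k P = s k"
        proof (cases "k = 0")
          case True thus ?thesis using z by simp
        next
          case False thus ?thesis using A e \<open>k \<le> l\<close> by auto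
        qed
      qed
    qed
  qed
  have set1: "set vs = insert (vs!0) ((!) vs ` {1..l})"
  proof -
    have "set vs = (!) vs ` {..<l+1}" using len by (auto simp: in_set_conv_nth)
    also have "{..<l+1} = insert 0 {1..l}" by auto
    finally show ?thesis by simp
  qed
  have notin: "vs!0 \<notin> (!) vs ` {1..l}" using dist len by (auto simp: nth_eq_iff_index_eq)
  have sub: "(!) vs ` {1..l} \<subseteq> set vs" using set1 by blast
  have notin2: "Q (vs!0) \<notin> Q ` (!) vs ` {1..l}"
  proof
    assume "Q (vs!0) \<in> Q ` (!) vs ` {1..l}"
    then obtain x where x: "x \<in> (!) vs ` {1..l}" "Q (vs!0) = Q x" by blast
    have "vs!0 \<in> set vs" using set1 by blast
    hence "vs!0 = x" using inj_onD[OF assms(5) x(2)] x(1) sub by blast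
    thus False using x(1) notin by blast
  qed
  have "Q ` set vs = insert (Q (vs!0)) (Q ` (!) vs ` {1..l})" using set1 by simp
  hence "\<not> dependent ((\<lambda>x. - Q (vs!0) + x) ` (Q ` (!) vs ` {1..l}))"
    using assms(6) affine_dependent_iff_dependent[OF notin2] by simp
  moreover have "(\<lambda>x. - Q (vs!0) + x) ` (Q ` (!) vs ` {1..l}) = w ` {1..l}"
    unfolding image_image w_def by (intro image_cong) (simp_all add: algebra_simps)
  ultimately have indW: "independent (w ` {1..l})" by simp
  have injw: "inj_on w {1..l}"
  proof (rule inj_onI)
    fix x y assume x: "x \<in> {1..l}" and y: "y \<in> {1..l}" and "w x = w y"
    hence "Q (vs!x) = Q (vs!y)" unfolding w_def by simp
    moreover have "vs!x \<in> set vs" "vs!y \<in> set vs" using x y sub by auto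
    ultimately have "vs!x = vs!y" using inj_onD[OF assms(5)] by blast
    thus "x = y" using dist x y len by (simp add: nth_eq_iff_index_eq)
  qed
  define b' where "b' v = bb (inv_into {1..l} w v)" for v
  have cardW: "card (w ` {1..l}) = l" using card_image[OF injw] by simp
  have "(\<Inter>e\<in>set es. hyp ends g Q e) = {P. \<forall>v\<in>w ` {1..l}. inner P v = b' v}"
  proof -
    have "(\<Inter>e\<in>set es. hyp ends g Q e) = {P. \<forall>k\<in>{1..l}. inner P (w k) = bb k}"
      unfolding I1 using C D by blast
    also have "\<dots> = {P. \<forall>v\<in>w ` {1..l}. inner P v = b' v}"
      unfolding b'_def using inv_into_f_f[OF injw] by auto
    finally show ?thesis .
  qed
  thus ?thesis using flat_solution[OF indW, of b'] cardW by simp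
qed
end
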